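(* Let $\tau>0$ and $\alpha,\beta\in\mathbb R$. Define $\mathcal M_\tau(g)=\frac1\tau\int_0^\tau\sigma g(\sigma)\,d\sigma$, so that $\mathcal M_\tau(\mathrm e^{i\alpha\cdot})=\frac1\tau\int_0^\tau\sigma\mathrm e^{i\alpha\sigma}\,d\sigma$. Then: (i) $$\int_0^\tau\Big(\mathrm e^{is\alpha}+i\beta\,\mathrm e^{is\beta}\,\mathcal M_\tau(\mathrm e^{i\alpha\cdot})\Big)\,ds=\tau\varphi(i\tau\alpha)-\tau\big(\mathrm e^{i\tau\beta}-1\big)\psi(i\tau\alpha);$$ (ii) the function $$\mathcal R_2(\alpha,\beta,\tau):=\int_0^\tau\mathrm e^{is(\alpha+\beta)}\,ds-\int_0^\tau\Big(\mathrm e^{is\alpha}+i\beta\,\mathrm e^{is\beta}\,\mathcal M_\tau(\mathrm e^{i\alpha\cdot})\Big)\,ds$$ satisfies $|\mathcal R_2(\alpha,\beta,\tau)|\le C\tau^3|\beta|^2$ for an absolute constant $C$ independent of $\alpha,\beta,\tau$.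
   Context: $\varphi(z)=\frac{e^z-1}{z}$ for $z\neq0$, $\varphi(0)=1$; $\psi(z)=\frac{e^z-1-ze^z}{z^2}$ for $z\ne0$, $\psi(0)=-\frac12$. *)

theory Defs
  imports "HOL-Analysis.Analysis"
begin

definition phi :: "complex \<Rightarrow> complex" where
  "phi z = (if z = 0 then 1 else (exp z - 1) / z)"

definition psi :: "complex \<Rightarrow> complex" where
  "psi z = (if z = 0 then - (1/2) else (exp z - 1 - z * exp z) / z^2)"

definition Mtau :: "real \<Rightarrow> (real \<Rightarrow> complex) \<Rightarrow> complex" where
  "Mtau \<tau> g = complex_of_real (1 / \<tau>) * integral {0..\<tau>} (\<lambda>\<sigma>. complex_of_real \<sigma> * g \<sigma>)"

definition R2 :: "real \<Rightarrow> real \<Rightarrow> real \<Rightarrow> complex" where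
  "R2 \<alpha> \<beta> \<tau> =
     integral {0..\<tau>} (\<lambda>s. exp (\<i> * of_real (s * (\<alpha> + \<beta>))))
   - integral {0..\<tau>} (\<lambda>s. exp (\<i> * of_real (s * \<alpha>))
        + \<i> * of_real \<beta> * exp (\<i> * of_real (s * \<beta>))
          * Mtau \<tau> (\<lambda>\<sigma>. exp (\<i> * of_real (\<alpha> * \<sigma>))))"

end

theory Submission imports Defs "HOL-Probability.Characteristic_Functions" begin

lemma intA:
  assumes "\<tau> \<ge> 0"
  shows "integral {0..\<tau>} (\<lambda>s. exp (\<i> * of_real (s * a))) = of_real \<tau> * phi (\<i> * of_real (\<tau> * a))"
proof (cases "a = 0 \<or> \<tau> = 0")
  case True
  then show ?thesis using assms by (auto simp: phi_def scaleR_conv_of_real)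
next
  case False
  have d: "((\<lambda>s. exp (\<i> * of_real (s * a)) / (\<i> * of_real a)) has_vector_derivative exp (\<i> * of_real (s * a))) (at s within {0..\<tau>})" for s
  proof -
    have "((\<lambda>z. exp (\<i> * z * of_real a) / (\<i> * of_real a)) has_field_derivative exp (\<i> * of_real s * of_real a)) (at (of_real s))"
      using False by (auto intro!: derivative_eq_intros)
    from has_vector_derivative_real_field[OF this] show ?thesis by (simp add: mult.assoc)
  qed
  have "((\<lambda>s. exp (\<i> * of_real (s * a))) has_integral
     (exp (\<i> * of_real (\<tau> * a)) / (\<i> * of_real a) - exp (\<i> * of_real (0 * a)) / (\<i> * of_real a))) {0..\<tau>}"
    by (rule fundamental_theorem_of_calculus[OF assms d])
  then show ?thesis using False by (simp add: integral_unique phi_def field_simps)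
qed

lemma intB:
  assumes "\<tau> \<ge> 0"
  shows "integral {0..\<tau>} (\<lambda>s. of_real s * exp (\<i> * of_real (a * s))) = - (complex_of_real \<tau> ^ 2 * psi (\<i> * of_real (\<tau> * a)))"
proof (cases "a = 0 \<or> \<tau> = 0")
  case True
  show ?thesis
  proof (cases "\<tau> = 0")
    case True then show ?thesis by simp
  next
    case False
    with True have a0: "a = 0" by simp
    have d: "((\<lambda>s. (of_real s)^2/2) has_vector_derivative complex_of_real s) (at s within {0..\<tau>})" for s
    proof -
      have "((\<lambda>z::complex. z^2/2) has_field_derivative of_real s) (at (of_real s))"
        by (auto intro!: derivative_eq_intros)
      from has_vector_derivative_real_field[OF this] show ?thesis by simp
    qed
    have "((\<lambda>s. complex_of_real s) has_integral ((of_real \<tau>)^2/2 - (of_real 0)^2/2)) {0..\<tau>}"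
      by (rule fundamental_theorem_of_calculus[OF assms d])
    then show ?thesis using a0 by (simp add: integral_unique psi_def)
  qed
next
  case False
  have d: "((\<lambda>s. exp (\<i> * of_real (a * s)) * (of_real s / (\<i> * of_real a) + 1 / (of_real a)^2)) has_vector_derivative of_real s * exp (\<i> * of_real (a * s))) (at s within {0..\<tau>})" for s
  proof -
    have "((\<lambda>z. exp (\<i> * of_real a * z) * (z / (\<i> * of_real a) + 1 / (of_real a)^2)) has_field_derivative of_real s * exp (\<i> * of_real a * of_real s)) (at (of_real s))"
      using False by (auto intro!: derivative_eq_intros simp: field_simps power2_eq_square)
    from has_vector_derivative_real_field[OF this] show ?thesis by (simp add: mult.assoc)
  qed
  have "((\<lambda>s. of_real s * exp (\<i> * of_real (a * s))) has_integral
     (exp (\<i> * of_real (a * \<tau>)) * (of_real \<tau> / (\<i> * of_real a) + 1 / (of_real a)^2) - exp (\<i> * of_real (a * 0)) * (of_real 0 / (\<i> * of_real a) + 1 / (of_real a)^2))) {0..\<tau>}"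
    by (rule fundamental_theorem_of_calculus[OF assms d])
  then show ?thesis using False by (simp add: integral_unique psi_def field_simps power2_eq_square mult.commute)
qed

lemma intC:
  assumes "\<tau> \<ge> 0"
  shows "integral {0..\<tau>} (\<lambda>s. \<i> * of_real b * exp (\<i> * of_real (s * b))) = exp (\<i> * of_real (\<tau> * b)) - 1"
proof -
  have "integral {0..\<tau>} (\<lambda>s. \<i> * of_real b * exp (\<i> * of_real (s * b))) = \<i> * of_real b * integral {0..\<tau>} (\<lambda>s. exp (\<i> * of_real (s * b)))"
    by simp
  also have "\<dots> = \<i> * of_real b * (of_real \<tau> * phi (\<i> * of_real (\<tau> * b)))" using intA[OF assms] by simp
  also have "\<dots> = exp (\<i> * of_real (\<tau> * b)) - 1"
    by (cases "\<tau> * b = 0") (auto simp: phi_def field_simps)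
  finally show ?thesis .
qed

lemma Mform:
  assumes "\<tau> > 0"
  shows "Mtau \<tau> (\<lambda>\<sigma>. exp (\<i> * of_real (\<alpha> * \<sigma>))) = - of_real \<tau> * psi (\<i> * of_real (\<tau> * \<alpha>))"
  using intB[of \<tau> \<alpha>] assms by (simp add: Mtau_def power2_eq_square field_simps)

lemma partI:
  assumes "\<tau> > 0"
  shows "integral {0..\<tau>} (\<lambda>s. exp (\<i> * of_real (s * \<alpha>))
                + \<i> * of_real \<beta> * exp (\<i> * of_real (s * \<beta>))
                  * Mtau \<tau> (\<lambda>\<sigma>. exp (\<i> * of_real (\<alpha> * \<sigma>))))
            = of_real \<tau> * phi (\<i> * of_real (\<tau> * \<alpha>))
              - of_real \<tau> * (exp (\<i> * of_real (\<tau> * \<beta>)) - 1) * psi (\<i> * of_real (\<tau> * \<alpha>))"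
proof -
  define M where "M = Mtau \<tau> (\<lambda>\<sigma>. exp (\<i> * of_real (\<alpha> * \<sigma>)))"
  have i1: "(\<lambda>s. exp (\<i> * of_real (s * \<alpha>))) integrable_on {0..\<tau>}"
    by (intro integrable_continuous_real continuous_intros)
  have i2: "(\<lambda>s. \<i> * of_real \<beta> * exp (\<i> * of_real (s * \<beta>)) * M) integrable_on {0..\<tau>}"
    by (intro integrable_continuous_real continuous_intros)
  have "integral {0..\<tau>} (\<lambda>s. exp (\<i> * of_real (s * \<alpha>)) + \<i> * of_real \<beta> * exp (\<i> * of_real (s * \<beta>)) * M)
     = integral {0..\<tau>} (\<lambda>s. exp (\<i> * of_real (s * \<alpha>))) + integral {0..\<tau>} (\<lambda>s. \<i> * of_real \<beta> * exp (\<i> * of_real (s * \<beta>))) * M"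
    using integral_add[OF i1 i2] by simp
  also have "\<dots> = of_real \<tau> * phi (\<i> * of_real (\<tau> * \<alpha>)) + (exp (\<i> * of_real (\<tau> * \<beta>)) - 1) * M"
    using intA[of \<tau> \<alpha>] intC[of \<tau> \<beta>] assms by simp
  finally show ?thesis using Mform[OF assms, of \<alpha>] unfolding M_def by simp
qed

lemma expapprox: "cmod (exp (\<i> * of_real x) - 1 - \<i> * of_real x) \<le> x^2 / 2"
  using iexp_approx1[of x 1] by (simp add: diff_diff_add power2_eq_square)

lemma partII:
  assumes "\<tau> > 0"
  shows "cmod (R2 \<alpha> \<beta> \<tau>) \<le> 1 * \<tau>^3 * \<bar>\<beta>\<bar>^2"
proof -
  define M where "M = Mtau \<tau> (\<lambda>\<sigma>. exp (\<i> * of_real (\<alpha> * \<sigma>)))"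
  define g where "g s = exp (\<i> * of_real (s * \<alpha>)) * (exp (\<i> * of_real (s * \<beta>)) - 1 - \<i> * of_real (s * \<beta>))" for s
  have R: "R2 \<alpha> \<beta> \<tau> = integral {0..\<tau>} (\<lambda>s. exp (\<i> * of_real (s * (\<alpha> + \<beta>)))) - integral {0..\<tau>} (\<lambda>s. exp (\<i> * of_real (s * \<alpha>))) - (exp (\<i> * of_real (\<tau> * \<beta>)) - 1) * M"
  proof -
    have i1: "(\<lambda>s. exp (\<i> * of_real (s * \<alpha>))) integrable_on {0..\<tau>}"
      by (intro integrable_continuous_real continuous_intros)
    have i2: "(\<lambda>s. \<i> * of_real \<beta> * exp (\<i> * of_real (s * \<beta>)) * M) integrable_on {0..\<tau>}"
      by (intro integrable_continuous_real continuous_intros)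
    show ?thesis unfolding R2_def M_def[symmetric] integral_add[OF i1 i2]
      using intC[of \<tau> \<beta>] assms by simp
  qed
  have IM: "integral {0..\<tau>} (\<lambda>s. of_real s * exp (\<i> * of_real (\<alpha> * s))) = of_real \<tau> * M"
    using assms by (simp add: M_def Mtau_def)
  have G: "integral {0..\<tau>} g = integral {0..\<tau>} (\<lambda>s. exp (\<i> * of_real (s * (\<alpha> + \<beta>)))) - integral {0..\<tau>} (\<lambda>s. exp (\<i> * of_real (s * \<alpha>))) - \<i> * of_real \<beta> * (of_real \<tau> * M)"
  proof -
    have "g = (\<lambda>s. exp (\<i> * of_real (s * (\<alpha> + \<beta>))) - exp (\<i> * of_real (s * \<alpha>)) - \<i> * of_real \<beta> * (of_real s * exp (\<i> * of_real (\<alpha> * s))))"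
      by (auto simp: g_def fun_eq_iff algebra_simps simp flip: exp_add)
    moreover have i1: "(\<lambda>s. exp (\<i> * of_real (s * (\<alpha> + \<beta>)))) integrable_on {0..\<tau>}"
      by (intro integrable_continuous_real continuous_intros)
    moreover have i2: "(\<lambda>s. exp (\<i> * of_real (s * \<alpha>))) integrable_on {0..\<tau>}"
      by (intro integrable_continuous_real continuous_intros)
    moreover have i3: "(\<lambda>s. \<i> * of_real \<beta> * (of_real s * exp (\<i> * of_real (\<alpha> * s)))) integrable_on {0..\<tau>}"
      by (intro integrable_continuous_real continuous_intros)
    ultimately show ?thesis
      using IM by (simp add: integral_diff integrable_diff)
  qed
  have R': "R2 \<alpha> \<beta> \<tau> = integral {0..\<tau>} g + (\<i> * of_real (\<tau> * \<beta>) - (exp (\<i> * of_real (\<tau> * \<beta>)) - 1)) * M"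
    unfolding R G by (simp add: algebra_simps)
  have bg: "cmod (integral {0..\<tau>} g) \<le> (\<tau>^2 * \<beta>^2 / 2) * (\<tau> - 0)"
  proof (rule integral_bound)
    show "continuous_on {0..\<tau>} g" unfolding g_def by (intro continuous_intros)
    fix t assume t: "t \<in> {0..\<tau>}"
    have "cmod (g t) = cmod (exp (\<i> * of_real (t * \<beta>)) - 1 - \<i> * of_real (t * \<beta>))"
      unfolding g_def norm_mult by simp
    also have "\<dots> \<le> (t * \<beta>)^2 / 2" by (rule expapprox)
    also have "\<dots> \<le> \<tau>^2 * \<beta>^2 / 2"
      using t by (auto simp: power_mult_distrib intro!: mult_right_mono power_mono)
    finally show "cmod (g t) \<le> \<tau>^2 * \<beta>^2 / 2" .
  qed (use assms in auto)
  have bM: "cmod M \<le> \<tau>"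
  proof -
    have "cmod (integral {0..\<tau>} (\<lambda>s. of_real s * exp (\<i> * of_real (\<alpha> * s)))) \<le> \<tau> * (\<tau> - 0)"
    proof (rule integral_bound)
      show "continuous_on {0..\<tau>} (\<lambda>s. of_real s * exp (\<i> * of_real (\<alpha> * s)))" by (intro continuous_intros)
      fix t assume t: "t \<in> {0..\<tau>}"
      then show "cmod (of_real t * exp (\<i> * of_real (\<alpha> * t))) \<le> \<tau>" by (simp add: norm_mult)
    qed (use assms in auto)
    then have "cmod (of_real \<tau> * M) \<le> \<tau> * \<tau>" using IM by simp
    then show ?thesis using assms by (simp add: norm_mult)
  qed
  have be: "cmod (\<i> * of_real (\<tau> * \<beta>) - (exp (\<i> * of_real (\<tau> * \<beta>)) - 1)) \<le> (\<tau> * \<beta>)^2 / 2"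
    using expapprox[of "\<tau> * \<beta>"] by (simp add: norm_minus_commute algebra_simps)
  have "cmod (R2 \<alpha> \<beta> \<tau>) \<le> cmod (integral {0..\<tau>} g) + cmod (\<i> * of_real (\<tau> * \<beta>) - (exp (\<i> * of_real (\<tau> * \<beta>)) - 1)) * cmod M"
    unfolding R' by (metis norm_mult norm_triangle_ineq)
  also have "\<dots> \<le> (\<tau>^2 * \<beta>^2 / 2) * \<tau> + ((\<tau> * \<beta>)^2 / 2) * \<tau>"
    using bg bM be by (intro add_mono mult_mono) auto
  also have "\<dots> = 1 * \<tau>^3 * \<bar>\<beta>\<bar>^2" by (simp add: power2_eq_square power3_eq_cube)
  finally show ?thesis .
qed

theorem lemma2p2:
  shows "(\<forall>\<tau> \<alpha> \<beta>. \<tau> > 0 \<longrightarrow>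
            integral {0..\<tau>} (\<lambda>s. exp (\<i> * of_real (s * \<alpha>))
                + \<i> * of_real \<beta> * exp (\<i> * of_real (s * \<beta>))
                  * Mtau \<tau> (\<lambda>\<sigma>. exp (\<i> * of_real (\<alpha> * \<sigma>))))
            = of_real \<tau> * phi (\<i> * of_real (\<tau> * \<alpha>))
              - of_real \<tau> * (exp (\<i> * of_real (\<tau> * \<beta>)) - 1) * psi (\<i> * of_real (\<tau> * \<alpha>)))
       \<and> (\<exists>C::real. \<forall>\<alpha> \<beta> \<tau>. \<tau> > 0 \<longrightarrow> cmod (R2 \<alpha> \<beta> \<tau>) \<le> C * \<tau>^3 * \<bar>\<beta>\<bar>^2)"
  using partI partII by blast

end
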